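(* Let $S$ be an expanding automaton semigroup and $H$ a subgroup of $S$ (a subsemigroup of $S$ which is a group, possibly with identity different from any identity of $S$). Then there is a self-similar group $G$ such that $H$ is isomorphic to a subgroup of $G$.
   Context: An expanding automaton is a quadruple $(Q,\Sigma,t,o)$ with $Q$ a finite set of states, $\Sigma$ a finite alphabet, $t:Q\times\Sigma\to Q$ and $o:Q\times\Sigma\to\Sigma^+$. Each state $q$ induces $q:\Sigma^*\to\Sigma^*$ by $q(\emptyset)=\emptyset$, $q(\sigma w)=o(q,\sigma)\,q'(w)$ with $q'=t(q,\sigma)$; an expanding automaton semigroup is the semigroup of maps generated under composition by the states. A self-similar group is the group generated by the states of an invertible synchronous automaton (output in $\Sigma$, $o(q,\cdot)$ a permutation of $\Sigma$ for each $q$) with possibly infinitely many states. *)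

theory Defs
  imports "HOL-Algebra.Group"
begin

fun run :: "('q \<Rightarrow> 'a \<Rightarrow> 'q) \<Rightarrow> ('q \<Rightarrow> 'a \<Rightarrow> 'a list) \<Rightarrow> 'q \<Rightarrow> 'a list \<Rightarrow> 'a list" where
  "run tr out q [] = []"
| "run tr out q (a # w) = out q a @ run tr out (tr q a) w"

text \<open>The map on words over the alphabet Al induced by state q (words outside Al* are
  left fixed, so that maps are compared only by their behaviour on Al*).\<close>
definition state_map :: "'a set \<Rightarrow> ('q \<Rightarrow> 'a \<Rightarrow> 'q) \<Rightarrow> ('q \<Rightarrow> 'a \<Rightarrow> 'a list) \<Rightarrow> 'q \<Rightarrow> 'a list \<Rightarrow> 'a list" where
  "state_map Al tr out q = (\<lambda>w. if w \<in> lists Al then run tr out q w else w)"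

definition expanding_automaton :: "'a set \<Rightarrow> 'q set \<Rightarrow> ('q \<Rightarrow> 'a \<Rightarrow> 'q) \<Rightarrow> ('q \<Rightarrow> 'a \<Rightarrow> 'a list) \<Rightarrow> bool" where
  "expanding_automaton Al Q tr out \<longleftrightarrow> finite Al \<and> finite Q \<and>
     (\<forall>q\<in>Q. \<forall>a\<in>Al. tr q a \<in> Q \<and> out q a \<noteq> [] \<and> set (out q a) \<subseteq> Al)"

inductive_set semigroup_closure :: "('b \<Rightarrow> 'b) set \<Rightarrow> ('b \<Rightarrow> 'b) set" for X where
  gen: "f \<in> X \<Longrightarrow> f \<in> semigroup_closure X"
| comp: "f \<in> semigroup_closure X \<Longrightarrow> g \<in> semigroup_closure X \<Longrightarrow> f \<circ> g \<in> semigroup_closure X"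

definition automaton_semigroup :: "'a set \<Rightarrow> 'q set \<Rightarrow> ('q \<Rightarrow> 'a \<Rightarrow> 'q) \<Rightarrow> ('q \<Rightarrow> 'a \<Rightarrow> 'a list) \<Rightarrow> ('a list \<Rightarrow> 'a list) set" where
  "automaton_semigroup Al Q tr out = semigroup_closure (state_map Al tr out ` Q)"

inductive_set group_closure :: "('b \<Rightarrow> 'b) set \<Rightarrow> ('b \<Rightarrow> 'b) set" for X where
  ident: "id \<in> group_closure X"
| gen: "f \<in> X \<Longrightarrow> f \<in> group_closure X"
| comp: "f \<in> group_closure X \<Longrightarrow> g \<in> group_closure X \<Longrightarrow> f \<circ> g \<in> group_closure X"
| inverse: "f \<in> group_closure X \<Longrightarrow> inv_into UNIV f \<in> group_closure X"

text \<open>Invertible synchronous automaton with finite alphabet and possibly infinitely many states: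
  output is a single letter and o(q, _) is a permutation of Al.\<close>
definition invertible_synchronous_automaton :: "'a set \<Rightarrow> 'q set \<Rightarrow> ('q \<Rightarrow> 'a \<Rightarrow> 'q) \<Rightarrow> ('q \<Rightarrow> 'a \<Rightarrow> 'a) \<Rightarrow> bool" where
  "invertible_synchronous_automaton Al Q tr out \<longleftrightarrow> finite Al \<and>
     (\<forall>q\<in>Q. \<forall>a\<in>Al. tr q a \<in> Q) \<and> (\<forall>q\<in>Q. bij_betw (out q) Al Al)"

definition self_similar_group :: "'a set \<Rightarrow> 'q set \<Rightarrow> ('q \<Rightarrow> 'a \<Rightarrow> 'q) \<Rightarrow> ('q \<Rightarrow> 'a \<Rightarrow> 'a) \<Rightarrow> ('a list \<Rightarrow> 'a list) set" where
  "self_similar_group Al Q tr out = group_closure (state_map Al tr (\<lambda>q a. [out q a]) ` Q)"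

definition fun_monoid :: "('b \<Rightarrow> 'b) set \<Rightarrow> ('b \<Rightarrow> 'b) \<Rightarrow> ('b \<Rightarrow> 'b) monoid" where
  "fun_monoid C e = \<lparr>carrier = C, mult = (\<circ>), one = e\<rparr>"

end

theory Submission
  imports Defs
begin

lemma run_props:
  assumes ea: "expanding_automaton Al Q tr out"
  shows "q\<in>Q \<Longrightarrow> w\<in>lists Al \<Longrightarrow> run tr out q w \<in> lists Al \<and> length w \<le> length (run tr out q w)"
proof (induction w arbitrary: q)
  case Nil then show ?case by simp
next
  case (Cons a w)
  have "tr q a \<in> Q" "out q a \<noteq> []" "set (out q a) \<subseteq> Al" using ea Cons.prems unfolding expanding_automaton_def by auto
  with Cons.IH[of "tr q a"] Cons.prems show ?case by (cases "out q a") auto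
qed

lemma run_append:
  assumes ea: "expanding_automaton Al Q tr out"
  shows "q\<in>Q \<Longrightarrow> u\<in>lists Al \<Longrightarrow> \<exists>q'\<in>Q. run tr out q (u@v) = run tr out q u @ run tr out q' v"
proof (induction u arbitrary: q)
  case Nil then show ?case by auto
next
  case (Cons a u)
  have "tr q a \<in> Q" using ea Cons.prems unfolding expanding_automaton_def by auto
  with Cons.IH[of "tr q a"] Cons.prems show ?case by auto
qed

definition seqp :: "'a set \<Rightarrow> ('a list \<Rightarrow> 'a list) \<Rightarrow> bool" where
  "seqp Al s \<longleftrightarrow> (\<forall>w. w\<notin>lists Al \<longrightarrow> s w = w) \<and> (\<forall>w\<in>lists Al. s w \<in> lists Al) \<and> s [] = [] \<and>
     (\<forall>u\<in>lists Al. \<forall>v\<in>lists Al. \<exists>z. s (u@v) = s u @ z \<and> length v \<le> length z)"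

lemma state_map_seqp:
  assumes ea: "expanding_automaton Al Q tr out" and q: "q\<in>Q"
  shows "seqp Al (state_map Al tr out q)"
  unfolding seqp_def
proof (intro conjI ballI allI impI)
  fix u v assume u: "u\<in>lists Al" and v: "v\<in>lists Al"
  obtain q' where q': "q'\<in>Q" "run tr out q (u@v) = run tr out q u @ run tr out q' v"
    using run_append[OF ea q u] by blast
  show "\<exists>z. state_map Al tr out q (u @ v) = state_map Al tr out q u @ z \<and> length v \<le> length z"
    using q' u v run_props[OF ea q'(1) v] unfolding state_map_def by auto
qed (use run_props[OF ea q] in \<open>auto simp: state_map_def\<close>)

lemma closure_seqp:
  assumes ea: "expanding_automaton Al Q tr out"
  shows "f \<in> semigroup_closure (state_map Al tr out ` Q) \<Longrightarrow> seqp Al f"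
proof (induction rule: semigroup_closure.induct)
  case (gen f) then show ?case using state_map_seqp[OF ea] by auto
next
  case (comp f g)
  show ?case unfolding seqp_def
  proof (intro conjI ballI allI impI)
    fix u v assume u: "u\<in>lists Al" and v: "v\<in>lists Al"
    from comp.IH(2) u v obtain z where z: "g (u@v) = g u @ z" "length v \<le> length z" unfolding seqp_def by blast
    have "g (u@v) \<in> lists Al" using comp.IH(2) u v unfolding seqp_def by auto
    hence zl: "z \<in> lists Al" "g u \<in> lists Al" using z by auto
    from comp.IH(1) zl obtain z' where z': "f (g u @ z) = f (g u) @ z'" "length z \<le> length z'" unfolding seqp_def by blast
    show "\<exists>z. (f \<circ> g) (u @ v) = (f \<circ> g) u @ z \<and> length v \<le> length z"
      using z z' by auto
  qed (use comp.IH in \<open>auto simp: seqp_def\<close>)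
qed


definition lp :: "'b set \<Rightarrow> ('b list \<Rightarrow> 'b list) \<Rightarrow> bool" where
  "lp A f \<longleftrightarrow> (\<forall>w. w \<notin> lists A \<longrightarrow> f w = w) \<and> (\<forall>w\<in>lists A. f w \<in> lists A \<and> length (f w) = length w)
     \<and> (\<forall>u\<in>lists A. \<forall>v\<in>lists A. take (length u) (f (u@v)) = f u)"

definition treeaut :: "'b set \<Rightarrow> ('b list \<Rightarrow> 'b list) \<Rightarrow> bool" where
  "treeaut A f \<longleftrightarrow> lp A f \<and> (\<exists>g. lp A g \<and> (\<forall>w\<in>lists A. g (f w) = w \<and> f (g w) = w))"

definition outT :: "('b list \<Rightarrow> 'b list) \<Rightarrow> 'b \<Rightarrow> 'b" where
  "outT f a = hd (f [a])"

definition trT :: "'b set \<Rightarrow> ('b list \<Rightarrow> 'b list) \<Rightarrow> 'b \<Rightarrow> ('b list \<Rightarrow> 'b list)" where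
  "trT A f a = (\<lambda>w. if w \<in> lists A then tl (f (a # w)) else w)"

lemma lp_first:
  assumes "lp A f" "a \<in> A" "w \<in> lists A"
  shows "f (a # w) = outT f a # tl (f (a # w))" "outT f a \<in> A"
proof -
  have l: "f [a] \<in> lists A" "length (f [a]) = 1" using assms unfolding lp_def by auto
  have "\<forall>u\<in>lists A. \<forall>v\<in>lists A. take (length u) (f (u@v)) = f u" using assms(1) unfolding lp_def by blast
  hence t0: "take (length [a]) (f ([a] @ w)) = f [a]" using assms(2,3) by (meson lists.Cons lists.Nil)
  hence t: "take 1 (f (a # w)) = f [a]" by simp
  have len: "length (f (a#w)) = Suc (length w)" using assms unfolding lp_def by auto
  then obtain c r where cr: "f (a#w) = c # r" by (cases "f (a#w)") auto
  from l obtain d where d: "f [a] = [d]" "d \<in> A" by (cases "f [a]") auto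
  from t cr d have "c = d" by auto
  then show "f (a # w) = outT f a # tl (f (a # w))" using cr d unfolding outT_def by simp
  show "outT f a \<in> A" using d unfolding outT_def by simp
qed

lemma lp_D: "lp A f \<Longrightarrow> w \<in> lists A \<Longrightarrow> f w \<in> lists A \<and> length (f w) = length w"
  unfolding lp_def by blast
lemma lp_take: "lp A f \<Longrightarrow> u \<in> lists A \<Longrightarrow> v \<in> lists A \<Longrightarrow> take (length u) (f (u@v)) = f u"
  unfolding lp_def by blast

lemma lp_trT:
  assumes f: "lp A f" and a: "a \<in> A"
  shows "lp A (trT A f a)"
  unfolding lp_def
proof (intro conjI allI impI ballI)
  fix w assume w: "w \<in> lists A"
  have aw: "a # w \<in> lists A" using a w by simp
  have fw: "f (a # w) = outT f a # tl (f (a # w))" using lp_first(1)[OF f a w] .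
  have fl: "f (a#w) \<in> lists A" "length (f (a#w)) = Suc (length w)" using lp_D[OF f aw] by auto
  have "tl (f (a#w)) \<in> lists A" using fl(1) fw by (metis Cons_in_lists_iff)
  moreover have "length (tl (f (a#w))) = length w" using fl(2) by simp
  ultimately have "tl (f (a#w)) \<in> lists A" "length (tl (f (a#w))) = length w" by auto
  then show "trT A f a w \<in> lists A" "length (trT A f a w) = length w"
    using w unfolding trT_def by auto
next
  fix u v assume u: "u \<in> lists A" and v: "v \<in> lists A"
  have "take (length (a#u)) (f ((a#u)@v)) = f (a#u)" using lp_take[OF f _ v, of "a#u"] u a by simp
  then have "tl (take (Suc (length u)) (f (a#u@v))) = tl (f (a#u))" by simp
  then have "take (length u) (tl (f (a#u@v))) = tl (f (a#u))" by (simp add: tl_take)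
  then show "take (length u) (trT A f a (u @ v)) = trT A f a u" using u v unfolding trT_def by simp
qed (simp add: trT_def)

lemma lp_single:
  assumes "lp A f" "a \<in> A" shows "f [a] = [outT f a]"
proof -
  have "length (f [a]) = 1" using assms unfolding lp_def by auto
  then show ?thesis unfolding outT_def by (cases "f [a]") auto
qed

lemma treeaut_out_bij:
  assumes "treeaut A f" shows "bij_betw (outT f) A A"
proof -
  obtain g where g: "lp A f" "lp A g" "\<forall>w\<in>lists A. g (f w) = w \<and> f (g w) = w" using assms unfolding treeaut_def by blast
  have fg: "outT g (outT f a) = a" if "a \<in> A" for a
  proof -
    have "f [a] = [outT f a]" using lp_single[OF g(1) that] .
    hence "g [outT f a] = [a]" using g(3) that lp_first(2)[OF g(1) that lists.Nil] by (metis lists.Cons lists.Nil)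
    then show ?thesis unfolding outT_def by simp
  qed
  have gf: "outT f (outT g a) = a" if "a \<in> A" for a
  proof -
    have "g [a] = [outT g a]" using lp_single[OF g(2) that] .
    hence "f [outT g a] = [a]" using g(3) that lp_first(2)[OF g(2) that lists.Nil] by (metis lists.Cons lists.Nil)
    then show ?thesis unfolding outT_def by simp
  qed
  show ?thesis
    by (rule bij_betw_byWitness[where f'="outT g"]) (use fg gf lp_first(2)[OF g(1) _ lists.Nil] lp_first(2)[OF g(2) _ lists.Nil] in \<open>auto\<close>)
qed

lemma treeaut_trT:
  assumes "treeaut A f" "a \<in> A" shows "treeaut A (trT A f a)"
proof -
  obtain g where g: "lp A f" "lp A g" "\<forall>w\<in>lists A. g (f w) = w \<and> f (g w) = w" using assms unfolding treeaut_def by blast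
  let ?b = "outT f a"
  have b: "?b \<in> A" using lp_first(2)[OF g(1) assms(2) lists.Nil] .
  have gb: "outT g ?b = a"
  proof -
    have "f [a] = [?b]" using lp_single[OF g(1) assms(2)] .
    hence "g [?b] = [a]" using g(3) assms(2) b by (metis lists.Cons lists.Nil)
    then show ?thesis unfolding outT_def by simp
  qed
  have "\<forall>w\<in>lists A. trT A g ?b (trT A f a w) = w \<and> trT A f a (trT A g ?b w) = w"
  proof
    fix w assume w: "w \<in> lists A"
    have fw: "f (a#w) = ?b # tl (f (a#w))" using lp_first(1)[OF g(1) assms(2) w] .
    have tlf: "tl (f (a#w)) \<in> lists A" using g(1) w assms(2) unfolding lp_def
      by (metis fw Cons_in_lists_iff lists.Cons)
    have gw: "g (?b#w) = a # tl (g (?b#w))" using lp_first(1)[OF g(2) b w] gb by simp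
    have tlg: "tl (g (?b#w)) \<in> lists A" using g(2) w b unfolding lp_def by (metis gw Cons_in_lists_iff lists.Cons)
    have "trT A g ?b (trT A f a w) = tl (g (?b # tl (f (a#w))))" using w tlf unfolding trT_def by simp
    also have "\<dots> = tl (g (f (a#w)))" using fw by simp
    also have "\<dots> = w" using g(3) w assms(2) by simp
    finally have 1: "trT A g ?b (trT A f a w) = w" .
    have "trT A f a (trT A g ?b w) = tl (f (a # tl (g (?b#w))))" using w tlg unfolding trT_def by simp
    also have "\<dots> = tl (f (g (?b#w)))" using gw by simp
    also have "\<dots> = w" using g(3) w b by simp
    finally show "trT A g ?b (trT A f a w) = w \<and> trT A f a (trT A g ?b w) = w" using 1 by simp
  qed
  then show ?thesis unfolding treeaut_def using lp_trT[OF g(1) assms(2)] lp_trT[OF g(2) b] by blast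
qed

lemma run_treeaut:
  assumes "lp A f" "w \<in> lists A"
  shows "run (trT A) (\<lambda>q a. [outT q a]) f w = f w"
  using assms
proof (induction w arbitrary: f)
  case Nil then show ?case unfolding lp_def
    by (metis length_0_conv lists.Nil run.simps(1))
next
  case (Cons a w)
  have a: "a \<in> A" "w \<in> lists A" using Cons.prems by auto
  have "run (trT A) (\<lambda>q a. [outT q a]) f (a#w) = outT f a # run (trT A) (\<lambda>q a. [outT q a]) (trT A f a) w" by simp
  also have "\<dots> = outT f a # trT A f a w" using Cons.IH[OF lp_trT[OF Cons.prems(1) a(1)] a(2)] by simp
  also have "\<dots> = f (a#w)" using lp_first(1)[OF Cons.prems(1) a] a unfolding trT_def by simp
  finally show ?case .
qed

lemma treeaut_in_ssg:
  assumes "finite A" "treeaut A f"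
  shows "invertible_synchronous_automaton A {f. treeaut A f} (trT A) outT"
    and "f \<in> self_similar_group A {f. treeaut A f} (trT A) outT"
proof -
  show "invertible_synchronous_automaton A {f. treeaut A f} (trT A) outT"
    unfolding invertible_synchronous_automaton_def using assms(1) treeaut_trT treeaut_out_bij by auto
  have "state_map A (trT A) (\<lambda>q a. [outT q a]) f = f"
  proof
    fix w show "state_map A (trT A) (\<lambda>q a. [outT q a]) f w = f w"
      using run_treeaut[of A f w] assms(2) unfolding state_map_def treeaut_def lp_def by auto
  qed
  then show "f \<in> self_similar_group A {f. treeaut A f} (trT A) outT"
    unfolding self_similar_group_def by (metis (mono_tags, lifting) assms(2) group_closure.gen image_eqI mem_Collect_eq)
qed


locale SG =
  fixes Al :: "'a set" and H :: "('a list \<Rightarrow> 'a list) set" and e :: "'a list \<Rightarrow> 'a list"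
  assumes fin: "finite Al" and seq: "\<And>h. h \<in> H \<Longrightarrow> seqp Al h" and grp: "group (fun_monoid H e)"
begin

definition iv where "iv h = inv\<^bsub>fun_monoid H e\<^esub> h"

lemma eH: "e \<in> H" using monoid.one_closed[OF group.is_monoid[OF grp]] by (simp add: fun_monoid_def)
lemma cH: "h \<in> H \<Longrightarrow> g \<in> H \<Longrightarrow> h \<circ> g \<in> H" using monoid.m_closed[OF group.is_monoid[OF grp]] by (simp add: fun_monoid_def)
lemma lone: "h \<in> H \<Longrightarrow> e \<circ> h = h" using monoid.l_one[OF group.is_monoid[OF grp]] by (simp add: fun_monoid_def)
lemma rone: "h \<in> H \<Longrightarrow> h \<circ> e = h" using monoid.r_one[OF group.is_monoid[OF grp]] by (simp add: fun_monoid_def)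
lemma ivH: "h \<in> H \<Longrightarrow> iv h \<in> H" using group.inv_closed[OF grp] by (simp add: fun_monoid_def iv_def)
lemma linv: "h \<in> H \<Longrightarrow> iv h \<circ> h = e" using group.l_inv[OF grp] by (simp add: fun_monoid_def iv_def)
lemma rinv: "h \<in> H \<Longrightarrow> h \<circ> iv h = e" using group.r_inv[OF grp] by (simp add: fun_monoid_def iv_def)

lemma app_ex: "h \<in> H \<Longrightarrow> u \<in> lists Al \<Longrightarrow> v \<in> lists Al \<Longrightarrow> \<exists>z. h (u@v) = h u @ z \<and> length v \<le> length z"
  using seq unfolding seqp_def by blast
lemma inl: "h \<in> H \<Longrightarrow> w \<in> lists Al \<Longrightarrow> h w \<in> lists Al" using seq unfolding seqp_def by blast
lemma nil: "h \<in> H \<Longrightarrow> h [] = []" using seq unfolding seqp_def by blast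
lemma outside: "h \<in> H \<Longrightarrow> w \<notin> lists Al \<Longrightarrow> h w = w" using seq unfolding seqp_def by blast
lemma len_le: "h \<in> H \<Longrightarrow> w \<in> lists Al \<Longrightarrow> length w \<le> length (h w)"
  using app_ex[of h "[]" w] nil by auto

definition P where "P = {u \<in> lists Al. \<exists>v. u@v \<in> lists Al \<and> e (u@v) = u@v}"

lemma fixX: assumes "h \<in> H" "x \<in> lists Al" "e x = x"
  shows "length (h x) = length x" "e (h x) = h x"
proof -
  have "iv h (h x) = x" using linv[OF assms(1)] assms(3) by (metis comp_apply)
  hence "length (h x) \<le> length x" using len_le[OF ivH[OF assms(1)] inl[OF assms(1,2)]] by simp
  then show "length (h x) = length x" using len_le[OF assms(1,2)] by simp
  show "e (h x) = h x" using lone[OF assms(1)] by (metis comp_apply)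
qed

lemma P_props: assumes h: "h \<in> H" and u: "u \<in> P"
  shows "h u \<in> P" "length (h u) = length u" "e u = u" "h u \<in> lists Al" "u \<in> lists Al"
proof -
  obtain v where v: "u \<in> lists Al" "u@v \<in> lists Al" "e (u@v) = u@v" using u unfolding P_def by auto
  have vl: "v \<in> lists Al" using v by simp
  obtain z where z: "h (u@v) = h u @ z" "length v \<le> length z" using app_ex[OF h v(1) vl] by blast
  have l: "length (h (u@v)) = length (u@v)" using fixX[OF h v(2,3)] by simp
  have l2: "length u \<le> length (h u)" using len_le[OF h v(1)] .
  show lh: "length (h u) = length u" using l l2 z by simp
  have hx: "h (u@v) \<in> lists Al" "e (h (u@v)) = h (u@v)" using inl[OF h v(2)] fixX[OF h v(2,3)] by auto
  show "h u \<in> P" unfolding P_def using hx z by auto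
  show "h u \<in> lists Al" using hx z by auto
  show "u \<in> lists Al" using v by simp
  obtain z' where z': "e (u@v) = e u @ z'" "length v \<le> length z'" using app_ex[OF eH v(1) vl] by blast
  have "length (e u) \<ge> length u" using len_le[OF eH v(1)] .
  moreover have "length (e (u@v)) = length (u@v)" using v by simp
  ultimately have "length (e u) = length u" using z' by simp
  then show "e u = u" using z' v(3) by (metis append_eq_append_conv)
qed

lemma inv_P: "h \<in> H \<Longrightarrow> u \<in> P \<Longrightarrow> iv h (h u) = u"
  using linv P_props(3) by (metis comp_apply)

lemma P_prefix: assumes "u @ v \<in> P" shows "u \<in> P"
proof -
  obtain w where w: "u @ v \<in> lists Al" "(u @ v) @ w \<in> lists Al" "e ((u @ v) @ w) = (u @ v) @ w"
    using assms unfolding P_def by blast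
  have "u @ (v @ w) \<in> lists Al" "e (u @ (v @ w)) = u @ (v @ w)" using w(2,3) by simp_all
  moreover have "u \<in> lists Al" using w(1) by simp
  ultimately show ?thesis unfolding P_def by blast
qed

lemma nil_P: "[] \<in> P" unfolding P_def using nil[OF eH] by auto

lemma P_child: assumes h: "h \<in> H" and ua: "u @ [a] \<in> P"
  shows "h (u@[a]) = h u @ [last (h (u@[a]))]" "last (h (u@[a])) \<in> Al"
proof -
  have u: "u \<in> P" using P_prefix[OF ua] .
  have ul: "u \<in> lists Al" "[a] \<in> lists Al" using P_props(5)[OF h ua] by auto
  obtain z where z: "h (u@[a]) = h u @ z" "1 \<le> length z" using app_ex[OF h ul] by force
  have "length (h (u@[a])) = length u + 1" using P_props(2)[OF h ua] by simp
  hence "length z = 1" using z P_props(2)[OF h u] by simp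
  then obtain c where "z = [c]" by (cases z) auto
  then show "h (u@[a]) = h u @ [last (h (u@[a]))]" using z by simp
  show "last (h (u@[a])) \<in> Al" using P_props(4)[OF h ua] z \<open>z = [c]\<close> by simp
qed

lemma faithful: assumes "h1 \<in> H" "h2 \<in> H" "\<forall>u\<in>P. h1 u = h2 u" shows "h1 = h2"
proof
  fix w
  show "h1 w = h2 w"
  proof (cases "w \<in> lists Al")
    case True
    have ee: "e (e w) = e w" using fun_cong[OF rone[OF eH], of w] by simp
    have "e w @ [] \<in> lists Al" "e (e w @ []) = e w @ []" "e w \<in> lists Al" using inl[OF eH True] ee by simp_all
    then have ew: "e w \<in> P" unfolding P_def by blast
    have "h1 w = h1 (e w)" using fun_cong[OF rone[OF assms(1)], of w] by simp
    also have "\<dots> = h2 (e w)" using assms(3) ew by simp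
    also have "\<dots> = h2 w" using fun_cong[OF rone[OF assms(2)], of w] by simp
    finally show ?thesis .
  qed (simp add: outside assms)
qed

end

context SG begin

definition L where "L u = {a\<in>Al. u@[a] \<in> P}"
definition Cm where "Cm u = Al - L u"
definition tau :: "'a list \<Rightarrow> 'a \<Rightarrow> nat" where "tau u = (SOME t. bij_betw t (Cm u) {0..<card (Cm u)})"

lemma tau_bij: "bij_betw (tau u) (Cm u) {0..<card (Cm u)}"
proof -
  have "finite (Cm u)" using fin unfolding Cm_def by simp
  then have "\<exists>t. bij_betw t (Cm u) {0..<card (Cm u)}" by (intro finite_same_card_bij) auto
  then show ?thesis unfolding tau_def by (rule someI_ex)
qed

lemma card_L_le: assumes h: "h \<in> H" and u: "u \<in> P" shows "card (L u) \<le> card (L (h u))"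
proof (rule card_inj_on_le[where f="\<lambda>a. last (h (u@[a]))"])
  show "inj_on (\<lambda>a. last (h (u@[a]))) (L u)"
  proof (rule inj_onI)
    fix a a' assume a: "a \<in> L u" "a' \<in> L u" "last (h (u@[a])) = last (h (u@[a']))"
    have "h (u@[a]) = h (u@[a'])" using P_child(1)[OF h] a unfolding L_def by (metis (no_types, lifting) mem_Collect_eq)
    then have "iv h (h (u@[a])) = iv h (h (u@[a']))" by simp
    then show "a = a'" using inv_P[OF h] a unfolding L_def by auto
  qed
  show "(\<lambda>a. last (h (u@[a]))) ` L u \<subseteq> L (h u)"
  proof
    fix c assume "c \<in> (\<lambda>a. last (h (u@[a]))) ` L u"
    then obtain a where a: "a \<in> L u" "c = last (h (u@[a]))" by blast
    then have ua: "u@[a] \<in> P" unfolding L_def by simp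
    have "h u @ [c] \<in> P" using P_child(1)[OF h ua] P_props(1)[OF h ua] a(2) by simp
    moreover have "c \<in> Al" using P_child(2)[OF h ua] a(2) by simp
    ultimately show "c \<in> L (h u)" unfolding L_def by simp
  qed
  show "finite (L (h u))" using fin unfolding L_def by simp
qed

lemma card_C: assumes h: "h \<in> H" and u: "u \<in> P" shows "card (Cm (h u)) = card (Cm u)"
proof -
  have "card (L u) \<le> card (L (h u))" by (rule card_L_le[OF h u])
  moreover have "card (L (h u)) \<le> card (L (iv h (h u)))" by (rule card_L_le[OF ivH[OF h] P_props(1)[OF h u]])
  ultimately have "card (L (h u)) = card (L u)" using inv_P[OF h u] by simp
  moreover have "L v \<subseteq> Al" "finite (L v)" for v using fin unfolding L_def by auto
  ultimately show ?thesis unfolding Cm_def by (simp add: card_Diff_subset)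
qed

definition sigma where "sigma h u a = the_inv_into (Cm (h u)) (tau (h u)) (tau u a)"
definition mu where "mu h u a = (if a \<in> L u then last (h (u@[a])) else sigma h u a)"

lemma sigma_props: assumes h: "h \<in> H" and u: "u \<in> P" and a: "a \<in> Cm u"
  shows "sigma h u a \<in> Cm (h u)" "tau (h u) (sigma h u a) = tau u a"
proof -
  have t: "tau u a \<in> {0..<card (Cm (h u))}" using bij_betwE[OF tau_bij] a card_C[OF h u] by auto
  show "sigma h u a \<in> Cm (h u)" unfolding sigma_def using t tau_bij[of "h u"]
    by (metis bij_betw_def the_inv_into_into order_refl)
  show "tau (h u) (sigma h u a) = tau u a" unfolding sigma_def using t tau_bij[of "h u"]
    by (simp add: f_the_inv_into_f_bij_betw)
qed

lemma mu_props: assumes h: "h \<in> H" and u: "u \<in> P" and a: "a \<in> Al"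
  shows "mu h u a \<in> Al" "mu h u a \<in> L (h u) \<longleftrightarrow> a \<in> L u"
proof -
  show "mu h u a \<in> Al"
    using P_child(2)[OF h] sigma_props(1)[OF h u] a unfolding mu_def L_def Cm_def by auto
  show "mu h u a \<in> L (h u) \<longleftrightarrow> a \<in> L u"
  proof (cases "a \<in> L u")
    case True
    then have "u@[a] \<in> P" unfolding L_def by simp
    then have ua: "u@[a] \<in> P" unfolding L_def by simp
    have m: "mu h u a = last (h (u@[a]))" using True unfolding mu_def by simp
    have "h u @ [mu h u a] \<in> P" using P_child(1)[OF h ua] P_props(1)[OF h ua] m by simp
    moreover have "mu h u a \<in> Al" using P_child(2)[OF h ua] m by simp
    ultimately show ?thesis using True unfolding L_def by simp
  next
    case False
    then show ?thesis using sigma_props(1)[OF h u] a unfolding mu_def Cm_def by auto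
  qed
qed

lemma mu_comp: assumes h: "h \<in> H" and g: "g \<in> H" and u: "u \<in> P" and a: "a \<in> Al"
  shows "mu (h \<circ> g) u a = mu h (g u) (mu g u a)"
proof (cases "a \<in> L u")
  case True
  then have ua: "u@[a] \<in> P" unfolding L_def by simp
  have gu: "g u \<in> P" using P_props(1)[OF g u] .
  have b: "mu g u a \<in> L (g u)" using mu_props(2)[OF g u a] True by simp
  have gua: "g (u@[a]) = g u @ [mu g u a]" using P_child(1)[OF g ua] True unfolding mu_def by simp
  have "(h \<circ> g) (u@[a]) = h (g u @ [mu g u a])" using gua by simp
  also have "\<dots> = h (g u) @ [mu h (g u) (mu g u a)]" using P_child(1)[OF h, of "g u" "mu g u a"] b unfolding mu_def L_def by auto
  finally show ?thesis using True unfolding mu_def by simp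
next
  case False
  have gu: "g u \<in> P" using P_props(1)[OF g u] .
  have aC: "a \<in> Cm u" using False a unfolding Cm_def by simp
  have b: "mu g u a \<notin> L (g u)" using mu_props(2)[OF g u a] False by simp
  have bC: "mu g u a \<in> Cm (g u)" using b mu_props(1)[OF g u a] unfolding Cm_def by simp
  have "mu h (g u) (mu g u a) = sigma h (g u) (sigma g u a)" using b False unfolding mu_def by simp
  also have "\<dots> = the_inv_into (Cm (h (g u))) (tau (h (g u))) (tau u a)"
    unfolding sigma_def[of h] using sigma_props(2)[OF g u aC] by simp
  also have "\<dots> = mu (h \<circ> g) u a" using False unfolding mu_def sigma_def by simp
  finally show ?thesis by simp
qed

lemma mu_e: assumes u: "u \<in> P" and a: "a \<in> Al" shows "mu e u a = a"
proof (cases "a \<in> L u")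
  case True
  then have "u@[a] \<in> P" unfolding L_def by simp
  then show ?thesis using True P_props(3)[OF eH] unfolding mu_def by simp
next
  case False
  then have aC: "a \<in> Cm u" using a unfolding Cm_def by simp
  have eu: "e u = u" using P_props(3)[OF eH u] .
  have "the_inv_into (Cm u) (tau u) (tau u a) = a"
    using tau_bij[of u] aC by (simp add: bij_betw_def the_inv_into_f_f)
  then show ?thesis using False eu unfolding mu_def sigma_def by simp
qed

end

locale SGE = SG +
  fixes enc :: "'a \<Rightarrow> nat"
  assumes inj: "inj_on enc Al"
begin

definition A where "A = enc ` Al"
definition dec where "dec = the_inv_into Al enc"

lemma dec_in: "b \<in> A \<Longrightarrow> dec b \<in> Al" unfolding A_def dec_def using inj by (auto simp: the_inv_into_f_f)
lemma enc_dec: "b \<in> A \<Longrightarrow> enc (dec b) = b" unfolding A_def dec_def using inj by (auto simp: the_inv_into_f_f)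
lemma dec_enc: "a \<in> Al \<Longrightarrow> dec (enc a) = a" unfolding dec_def using inj by (simp add: the_inv_into_f_f)
lemma enc_in: "a \<in> Al \<Longrightarrow> enc a \<in> A" unfolding A_def by simp

fun ext :: "('a list \<Rightarrow> 'a list) \<Rightarrow> 'a list \<Rightarrow> nat list \<Rightarrow> nat list" where
  "ext h u [] = []"
| "ext h u (b # w) = enc (mu h u (dec b)) # (if dec b \<in> L u then ext h (u @ [dec b]) w else w)"

lemma ext_lists: "h \<in> H \<Longrightarrow> u \<in> P \<Longrightarrow> w \<in> lists A \<Longrightarrow> ext h u w \<in> lists A \<and> length (ext h u w) = length w"
proof (induction w arbitrary: u)
  case Nil then show ?case by simp
next
  case (Cons b w)
  have d: "dec b \<in> Al" using dec_in Cons.prems by simp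
  have "u @ [dec b] \<in> P" if "dec b \<in> L u" using that unfolding L_def by simp
  then show ?case using Cons.IH[of "u @ [dec b]"] Cons.prems enc_in[OF mu_props(1)[OF Cons.prems(1,2) d]] by auto
qed

lemma ext_app: "\<exists>r. ext h u (x @ y) = ext h u x @ r"
proof (induction x arbitrary: u)
  case Nil then show ?case by simp
next
  case (Cons b x)
  then show ?case by (cases "dec b \<in> L u") auto
qed

lemma ext_comp: "h \<in> H \<Longrightarrow> g \<in> H \<Longrightarrow> u \<in> P \<Longrightarrow> w \<in> lists A \<Longrightarrow> ext (h \<circ> g) u w = ext h (g u) (ext g u w)"
proof (induction w arbitrary: u)
  case Nil then show ?case by simp
next
  case (Cons b w)
  have d: "dec b \<in> Al" using dec_in Cons.prems by simp
  have m: "mu g u (dec b) \<in> Al" using mu_props(1)[OF Cons.prems(2,3) d] .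
  have de: "dec (enc (mu g u (dec b))) = mu g u (dec b)" using dec_enc[OF m] .
  have iff: "mu g u (dec b) \<in> L (g u) \<longleftrightarrow> dec b \<in> L u" using mu_props(2)[OF Cons.prems(2,3) d] .
  show ?case
  proof (cases "dec b \<in> L u")
    case True
    have ua: "u @ [dec b] \<in> P" using True unfolding L_def by simp
    have gua: "g (u@[dec b]) = g u @ [mu g u (dec b)]" using P_child(1)[OF Cons.prems(2) ua] True unfolding mu_def by simp
    have "ext (h \<circ> g) u (b # w) = enc (mu (h \<circ> g) u (dec b)) # ext (h \<circ> g) (u @ [dec b]) w" using True by simp
    also have "\<dots> = enc (mu h (g u) (mu g u (dec b))) # ext h (g (u @ [dec b])) (ext g (u @ [dec b]) w)"
      using Cons.IH[OF Cons.prems(1,2) ua] Cons.prems mu_comp[OF Cons.prems(1,2,3) d] by (simp add: comp_def)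
    also have "\<dots> = ext h (g u) (ext g u (b # w))" using True de iff gua by simp
    finally show ?thesis .
  next
    case False
    show ?thesis using False de iff mu_comp[OF Cons.prems(1,2,3) d] by (simp add: comp_def)
  qed
qed

lemma ext_e: "u \<in> P \<Longrightarrow> w \<in> lists A \<Longrightarrow> ext e u w = w"
proof (induction w arbitrary: u)
  case Nil then show ?case by simp
next
  case (Cons b w)
  have d: "dec b \<in> Al" using dec_in Cons.prems by simp
  have "u @ [dec b] \<in> P" if "dec b \<in> L u" using that unfolding L_def by simp
  then show ?case using Cons mu_e[OF Cons.prems(1) d] enc_dec by auto
qed

lemma ext_P: "h \<in> H \<Longrightarrow> u @ v \<in> P \<Longrightarrow> ext h u (map enc v) = map enc (drop (length u) (h (u @ v)))"
proof (induction v arbitrary: u)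
  case Nil
  then show ?case using P_props(2)[OF Nil.prems(1)] by simp
next
  case (Cons a v)
  have ua: "u @ [a] \<in> P" using P_prefix[of "u @ [a]" v] Cons.prems by simp
  have a: "a \<in> Al" using P_props(5)[OF Cons.prems(1) ua] by simp
  have aL: "a \<in> L u" using ua a unfolding L_def by simp
  have IH: "ext h (u@[a]) (map enc v) = map enc (drop (Suc (length u)) (h (u @ a # v)))"
    using Cons.IH[OF Cons.prems(1), of "u@[a]"] Cons.prems by simp
  have uav: "(u @ [a]) @ v \<in> lists Al" using P_props(5)[OF Cons.prems] by simp
  obtain z where z: "h ((u@[a]) @ v) = h (u@[a]) @ z"
    using app_ex[OF Cons.prems(1), of "u@[a]" v] uav by auto
  have hua: "h (u@[a]) = h u @ [mu h u a]" using P_child(1)[OF Cons.prems(1) ua] aL unfolding mu_def by simp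
  have lhu: "length (h u) = length u" using P_props(2)[OF Cons.prems(1) P_prefix[OF ua]] .
  have "drop (length u) (h (u @ a # v)) = mu h u a # drop (Suc (length u)) (h (u @ a # v))"
    using z hua lhu by simp
  then show ?case using IH aL dec_enc[OF a] by simp
qed

definition phi where "phi h = (\<lambda>w. if w \<in> lists A then ext h [] w else w)"

lemma phi_lp: "h \<in> H \<Longrightarrow> lp A (phi h)"
  unfolding lp_def phi_def
proof (intro conjI allI impI ballI)
  fix u v assume h: "h \<in> H" and u: "u \<in> lists A" and v: "v \<in> lists A"
  obtain r where "ext h [] (u @ v) = ext h [] u @ r" using ext_app by blast
  then show "take (length u) (if u @ v \<in> lists A then ext h [] (u @ v) else u @ v) = (if u \<in> lists A then ext h [] u else u)"
    using u v ext_lists[OF h nil_P u] by simp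
qed (use ext_lists nil_P in auto)

lemma phi_comp: "h \<in> H \<Longrightarrow> g \<in> H \<Longrightarrow> phi (h \<circ> g) = phi h \<circ> phi g"
proof
  fix w assume h: "h \<in> H" and g: "g \<in> H"
  show "phi (h \<circ> g) w = (phi h \<circ> phi g) w"
    using ext_comp[OF h g nil_P] ext_lists[OF g nil_P] nil[OF g] unfolding phi_def by auto
qed

lemma phi_e: "w \<in> lists A \<Longrightarrow> phi e w = w"
  unfolding phi_def using ext_e[OF nil_P] by simp

lemma phi_treeaut: assumes h: "h \<in> H" shows "treeaut A (phi h)"
proof -
  have "phi (iv h) (phi h w) = w \<and> phi h (phi (iv h) w) = w" if w: "w \<in> lists A" for w
  proof
    have "phi (iv h) (phi h w) = phi (iv h \<circ> h) w" using fun_cong[OF phi_comp[OF ivH[OF h] h], of w] by simp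
    also have "\<dots> = w" using linv[OF h] phi_e[OF w] by simp
    finally show "phi (iv h) (phi h w) = w" .
    have "phi h (phi (iv h) w) = phi (h \<circ> iv h) w" using fun_cong[OF phi_comp[OF h ivH[OF h]], of w] by simp
    also have "\<dots> = w" using rinv[OF h] phi_e[OF w] by simp
    finally show "phi h (phi (iv h) w) = w" .
  qed
  then show ?thesis unfolding treeaut_def using phi_lp[OF h] phi_lp[OF ivH[OF h]] by blast
qed

lemma phi_inj: "inj_on phi H"
proof (rule inj_onI)
  fix h1 h2 assume h: "h1 \<in> H" "h2 \<in> H" "phi h1 = phi h2"
  have "\<forall>u\<in>P. h1 u = h2 u"
  proof
    fix u assume u: "u \<in> P"
    have ul: "map enc u \<in> lists A" using P_props(5)[OF eH u] enc_in by auto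
    have e1: "ext h1 [] (map enc u) = map enc (h1 u)" using ext_P[OF h(1), of "[]" u] u by simp
    have e2: "ext h2 [] (map enc u) = map enc (h2 u)" using ext_P[OF h(2), of "[]" u] u by simp
    have "phi h1 (map enc u) = phi h2 (map enc u)" using h(3) by simp
    hence "map enc (h1 u) = map enc (h2 u)" using e1 e2 ul unfolding phi_def by simp
    moreover have "set (h1 u) \<union> set (h2 u) \<subseteq> Al" using P_props(4)[OF h(1) u] P_props(4)[OF h(2) u] by auto
    ultimately show "h1 u = h2 u" using map_inj_on inj_on_subset[OF inj] by blast
  qed
  then show "h1 = h2" using faithful h by blast
qed

end

theorem mainTheorem11:
  fixes Al :: "'a set" and Q :: "'q set"
    and tr :: "'q \<Rightarrow> 'a \<Rightarrow> 'q" and out :: "'q \<Rightarrow> 'a \<Rightarrow> 'a list"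
    and H :: "('a list \<Rightarrow> 'a list) set" and e :: "'a list \<Rightarrow> 'a list"
  assumes "expanding_automaton Al Q tr out"
    and "H \<subseteq> automaton_semigroup Al Q tr out"
    and "group (fun_monoid H e)"
  shows "\<exists>(Al' :: nat set) (Q' :: (nat list \<Rightarrow> nat list) set) tr' out' \<phi>.
           invertible_synchronous_automaton Al' Q' tr' out' \<and>
           \<phi> \<in> hom (fun_monoid H e) (fun_monoid (self_similar_group Al' Q' tr' out') id) \<and>
           inj_on \<phi> H"
proof -
  have fin: "finite Al" using assms(1) unfolding expanding_automaton_def by simp
  obtain enc :: "'a \<Rightarrow> nat" and n where enc: "inj_on enc Al" using finite_imp_inj_to_nat_seg[OF fin] by blast
  have sq: "\<And>h. h \<in> H \<Longrightarrow> seqp Al h" using assms(2) closure_seqp[OF assms(1)] unfolding automaton_semigroup_def by blast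
  interpret SGE Al H e enc
    unfolding SGE_def SGE_axioms_def SG_def using fin sq assms(3) enc by blast
  have finA: "finite A" unfolding A_def using fin by simp
  have "invertible_synchronous_automaton A {f. treeaut A f} (trT A) outT"
    using treeaut_in_ssg(1)[OF finA phi_treeaut[OF eH]] .
  moreover have "phi \<in> hom (fun_monoid H e) (fun_monoid (self_similar_group A {f. treeaut A f} (trT A) outT) id)"
    unfolding hom_def fun_monoid_def
    using treeaut_in_ssg(2)[OF finA phi_treeaut] phi_comp by auto
  ultimately show ?thesis using phi_inj by blast
qed

end
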